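(* Let $\Gamma$ be a uniform layered graph with unique minimal vertex. Then $B(\Gamma)\cong(\operatorname{gr}A(\Gamma))^!$, the isomorphism being induced by $v^*\mapsto v$ for $v\in V_+$.
   Context: A layered graph is a finite directed graph $\Gamma=(V,E)$ with $V=\bigsqcup_{i=0}^{N}V_i$ such that every edge from $V_i$ goes to $V_{i-1}$; $V_+=\bigsqcup_{i\ge1}V_i$, $V_{\ge k}=\bigsqcup_{i\ge k}V_i$, $S(v)=\{w:(v,w)\in E\}$, nonempty for $v\in V_+$, $|V_0|=1$. $\Gamma$ is uniform if for every $v\in V_{\ge2}$ the elements of $S(v)$ form a single class under the transitive closure of $w\approx u$ iff $S(w)\cap S(u)\neq\emptyset$. For such $\Gamma$ one has $\operatorname{gr}A(\Gamma)\cong T(W)/\langle R\rangle$ with $W=\operatorname{span}V_+$ and $R=\operatorname{span}\{v\otimes(u-w): v\in V_{\ge2}, u,w\in S(v)\}\subseteq W\otimes W$. For a quadratic algebra $T(W)/\langle R\rangle$, its quadratic dual is $T(W^* )/\langle R^\perp\rangle$, where $R^\perp\subseteq W^*\otimes W^*$ is the set of elements annihilating $R$ under the pairing $\langle x\otimes y,v\otimes w\rangle=x(v)y(w)$; $\{v^*\}$ is the dual basis to $V_+$. $B(\Gamma)=T(V_+)/R_B$ over a field $\mathbb F$, where $R_B$ is the two-sided ideal generated by $\{vw: v,w\in V_+,(v,w)\notin E\}\cup\{v\sum_{w\in S(v)}w: v\in V_{\ge2}\}$. *)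

theory Defs
  imports "HOL-Algebra.QuotRing"
begin

definition layer :: "'v set \<Rightarrow> ('v \<Rightarrow> nat) \<Rightarrow> nat \<Rightarrow> 'v set" where
  "layer V lev i = {v \<in> V. lev v = i}"

definition Vplus :: "'v set \<Rightarrow> ('v \<Rightarrow> nat) \<Rightarrow> 'v set" where
  "Vplus V lev = {v \<in> V. 1 \<le> lev v}"

definition Vge :: "'v set \<Rightarrow> ('v \<Rightarrow> nat) \<Rightarrow> nat \<Rightarrow> 'v set" where
  "Vge V lev k = {v \<in> V. k \<le> lev v}"

definition succs :: "('v \<times> 'v) set \<Rightarrow> 'v \<Rightarrow> 'v set" where
  "succs E v = {w. (v, w) \<in> E}"

definition layered_graph :: "'v set \<Rightarrow> ('v \<times> 'v) set \<Rightarrow> ('v \<Rightarrow> nat) \<Rightarrow> bool" where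
  "layered_graph V E lev \<longleftrightarrow>
     finite V \<and> E \<subseteq> V \<times> V \<and>
     (\<forall>(v, w) \<in> E. lev v = lev w + 1) \<and>
     (\<forall>v \<in> Vplus V lev. succs E v \<noteq> {}) \<and>
     card (layer V lev 0) = 1"

definition approx_rel :: "('v \<times> 'v) set \<Rightarrow> 'v \<Rightarrow> 'v \<Rightarrow> bool" where
  "approx_rel E w u \<longleftrightarrow> succs E w \<inter> succs E u \<noteq> {}"

definition uniform :: "'v set \<Rightarrow> ('v \<times> 'v) set \<Rightarrow> ('v \<Rightarrow> nat) \<Rightarrow> bool" where
  "uniform V E lev \<longleftrightarrow>
     (\<forall>v \<in> Vge V lev 2. \<forall>u \<in> succs E v. \<forall>w \<in> succs E v.
        (u, w) \<in> ({(a, b). a \<in> succs E v \<and> b \<in> succs E v \<and> approx_rel E a b})\<^sup>*)"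

text \<open>T(span X): elements are finitely supported functions from words over X to the field;
  multiplication is concatenation convolution.\<close>

definition fa_carrier :: "'a set \<Rightarrow> ('a list \<Rightarrow> 'k::field) set" where
  "fa_carrier X = {f. finite {w. f w \<noteq> 0} \<and> (\<forall>w. f w \<noteq> 0 \<longrightarrow> set w \<subseteq> X)}"

definition fa_mult :: "('a list \<Rightarrow> 'k::field) \<Rightarrow> ('a list \<Rightarrow> 'k) \<Rightarrow> 'a list \<Rightarrow> 'k" where
  "fa_mult f g = (\<lambda>w. \<Sum>i\<le>length w. f (take i w) * g (drop i w))"

definition free_alg :: "'a set \<Rightarrow> ('a list \<Rightarrow> 'k::field) ring" where
  "free_alg X = \<lparr>carrier = fa_carrier X, mult = fa_mult,
      one = (\<lambda>w. if w = [] then 1 else 0), zero = (\<lambda>_. 0),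
      add = (\<lambda>f g w. f w + g w)\<rparr>"

definition mon :: "'a list \<Rightarrow> 'a list \<Rightarrow> 'k::field" where
  "mon w = (\<lambda>u. if u = w then 1 else 0)"

definition fa_const :: "'k::field \<Rightarrow> 'a list \<Rightarrow> 'k" where
  "fa_const c = (\<lambda>u. if u = [] then c else 0)"

definition lin_span :: "('a list \<Rightarrow> 'k::field) set \<Rightarrow> ('a list \<Rightarrow> 'k) set" where
  "lin_span G = {f. \<exists>A c. finite A \<and> A \<subseteq> G \<and> f = (\<lambda>w. \<Sum>g\<in>A. c g * g w)}"

definition tensor2 :: "'a set \<Rightarrow> ('a list \<Rightarrow> 'k::field) set" where
  "tensor2 X = {f. \<forall>w. f w \<noteq> 0 \<longrightarrow> (\<exists>a b. w = [a, b] \<and> a \<in> X \<and> b \<in> X)}"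

definition Rrel :: "'v set \<Rightarrow> ('v \<times> 'v) set \<Rightarrow> ('v \<Rightarrow> nat) \<Rightarrow> ('v list \<Rightarrow> 'k::field) set" where
  "Rrel V E lev = lin_span {(\<lambda>x. mon [v, u] x - mon [v, w] x) | v u w.
       v \<in> Vge V lev 2 \<and> u \<in> succs E v \<and> w \<in> succs E v}"

text \<open>Dual basis vectors v* are represented by the tagged letters Dual v.\<close>
datatype 'v dualv = Dual 'v

definition pair2 :: "'v set \<Rightarrow> ('v dualv list \<Rightarrow> 'k::field) \<Rightarrow> ('v list \<Rightarrow> 'k) \<Rightarrow> 'k" where
  "pair2 Vp X r = (\<Sum>a\<in>Vp. \<Sum>b\<in>Vp. X [Dual a, Dual b] * r [a, b])"

definition Rperp :: "'v set \<Rightarrow> ('v \<times> 'v) set \<Rightarrow> ('v \<Rightarrow> nat) \<Rightarrow> ('v dualv list \<Rightarrow> 'k::field) set" where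
  "Rperp V E lev = {X \<in> tensor2 (Dual ` Vplus V lev).
       \<forall>r \<in> Rrel V E lev. pair2 (Vplus V lev) X r = (0::'k)}"

definition dual_ideal :: "'v set \<Rightarrow> ('v \<times> 'v) set \<Rightarrow> ('v \<Rightarrow> nat) \<Rightarrow> ('v dualv list \<Rightarrow> 'k::field) set" where
  "dual_ideal V E lev = genideal (free_alg (Dual ` Vplus V lev)) (Rperp V E lev)"

definition quad_dual :: "'v set \<Rightarrow> ('v \<times> 'v) set \<Rightarrow> ('v \<Rightarrow> nat) \<Rightarrow> ('v dualv list \<Rightarrow> 'k::field) set ring" where
  "quad_dual V E lev = free_alg (Dual ` Vplus V lev) Quot dual_ideal V E lev"

definition RB_gens :: "'v set \<Rightarrow> ('v \<times> 'v) set \<Rightarrow> ('v \<Rightarrow> nat) \<Rightarrow> ('v list \<Rightarrow> 'k::field) set" where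
  "RB_gens V E lev =
     {mon [v, w] | v w. v \<in> Vplus V lev \<and> w \<in> Vplus V lev \<and> (v, w) \<notin> E} \<union>
     {(\<lambda>x. \<Sum>w\<in>succs E v. mon [v, w] x) | v. v \<in> Vge V lev 2}"

definition RB :: "'v set \<Rightarrow> ('v \<times> 'v) set \<Rightarrow> ('v \<Rightarrow> nat) \<Rightarrow> ('v list \<Rightarrow> 'k::field) set" where
  "RB V E lev = genideal (free_alg (Vplus V lev)) (RB_gens V E lev)"

definition B_alg :: "'v set \<Rightarrow> ('v \<times> 'v) set \<Rightarrow> ('v \<Rightarrow> nat) \<Rightarrow> ('v list \<Rightarrow> 'k::field) set ring" where
  "B_alg V E lev = free_alg (Vplus V lev) Quot RB V E lev"

end

theory Submission
  imports Defs
begin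


lemma img_coset:
  assumes "\<And>x y. h (x \<oplus>\<^bsub>R\<^esub> y) = h x \<oplus>\<^bsub>S\<^esub> h y"
  shows "h ` (I +>\<^bsub>R\<^esub> a) = (h ` I) +>\<^bsub>S\<^esub> h a"
  unfolding a_r_coset_def' using assms by (simp add: image_UN)

lemma quot_iso:
  assumes inj: "inj h"
    and m: "\<And>x y. h (x \<otimes>\<^bsub>R\<^esub> y) = h x \<otimes>\<^bsub>S\<^esub> h y"
    and a: "\<And>x y. h (x \<oplus>\<^bsub>R\<^esub> y) = h x \<oplus>\<^bsub>S\<^esub> h y"
    and o: "h \<one>\<^bsub>R\<^esub> = \<one>\<^bsub>S\<^esub>"
    and c: "h ` carrier R = carrier S"
    and I: "h ` I = J"
  shows "(\<lambda>A. h ` A) \<in> ring_iso (R Quot I) (S Quot J)"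
proof (rule ring_iso_memI)
  have co: "\<And>x. h ` (I +>\<^bsub>R\<^esub> x) = J +>\<^bsub>S\<^esub> h x" using img_coset[of h R S, OF a] I by simp
  show "h ` x \<in> carrier (S Quot J)" if "x \<in> carrier (R Quot I)" for x
    using that c co unfolding FactRing_def A_RCOSETS_def' by simp blast
  show "h ` (x \<otimes>\<^bsub>R Quot I\<^esub> y) = h ` x \<otimes>\<^bsub>S Quot J\<^esub> h ` y" for x y
  proof -
    have "h ` (x \<otimes>\<^bsub>R Quot I\<^esub> y) = (\<Union>a\<in>x. \<Union>b\<in>y. h ` (I +>\<^bsub>R\<^esub> (a \<otimes>\<^bsub>R\<^esub> b)))"
      unfolding FactRing_def rcoset_mult_def by (simp add: image_UN)
    also have "\<dots> = (\<Union>a\<in>x. \<Union>b\<in>y. J +>\<^bsub>S\<^esub> (h a \<otimes>\<^bsub>S\<^esub> h b))" using co m by simp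
    also have "\<dots> = h ` x \<otimes>\<^bsub>S Quot J\<^esub> h ` y"
      unfolding FactRing_def rcoset_mult_def by simp
    finally show ?thesis .
  qed
  show "h ` (x \<oplus>\<^bsub>R Quot I\<^esub> y) = h ` x \<oplus>\<^bsub>S Quot J\<^esub> h ` y" for x y
    unfolding FactRing_def set_add_def' using a by (auto simp: image_UN)
  show "h ` \<one>\<^bsub>R Quot I\<^esub> = \<one>\<^bsub>S Quot J\<^esub>"
    unfolding FactRing_def using co o by simp
  show "bij_betw ((`) h) (carrier (R Quot I)) (carrier (S Quot J))"
  proof (rule bij_betw_imageI)
    show "inj_on ((`) h) (carrier (R Quot I))" using inj
      by (meson inj_image_eq_iff inj_onI)
    show "(`) h ` carrier (R Quot I) = carrier (S Quot J)"
      using c co unfolding FactRing_def A_RCOSETS_def' by (auto simp: image_UN) (metis (no_types, lifting) image_iff)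
  qed
qed

lemma genideal_not_ring: "\<not> ring R \<Longrightarrow> genideal R T = UNIV"
  unfolding genideal_def ideal_def by auto

lemma ideal_transport:
  assumes "ideal I R" and h: "h \<in> ring_iso R S" and h': "h' \<in> ring_hom S R"
    and inv1: "\<And>x. h' (h x) = x" and inv2: "\<And>y. h (h' y) = y"
    and z: "h \<zero>\<^bsub>R\<^esub> = \<zero>\<^bsub>S\<^esub>"
  shows "ideal (h ` I) S"
proof -
  have rR: "ring R" using assms(1) unfolding ideal_def by auto
  have "ring (S \<lparr> zero := h \<zero>\<^bsub>R\<^esub> \<rparr>)" using ring.ring_iso_imp_img_ring[OF rR h] .
  hence rS: "ring S" using z by simp
  have hr: "ring_hom_ring S R h'" using rR rS h' by (simp add: ring_hom_ringI2)
  have Ic: "I \<subseteq> carrier R" using assms(1) ideal.axioms(1) additive_subgroup.a_subset by blast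
  have "{r \<in> carrier S. h' r \<in> I} = h ` I"
  proof
    show "{r \<in> carrier S. h' r \<in> I} \<subseteq> h ` I" using inv2 by (auto, metis image_eqI)
    show "h ` I \<subseteq> {r \<in> carrier S. h' r \<in> I}" using Ic inv1 ring_iso_memE(1)[OF h] by auto
  qed
  thus ?thesis using ring_hom_ring.ideal_vimage[OF hr assms(1)] by simp
qed

lemma genideal_transport:
  assumes h: "h \<in> ring_iso R S" and h': "h' \<in> ring_iso S R"
    and inv1: "\<And>x. h' (h x) = x" and inv2: "\<And>y. h (h' y) = y"
    and z: "h \<zero>\<^bsub>R\<^esub> = \<zero>\<^bsub>S\<^esub>" and z': "h' \<zero>\<^bsub>S\<^esub> = \<zero>\<^bsub>R\<^esub>"
  shows "h ` genideal R T = genideal S (h ` T)"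
proof -
  have hh: "h \<in> ring_hom R S" "h' \<in> ring_hom S R" using h h' unfolding ring_iso_def by auto
  have img: "h ` A = h' -` A" for A using inv1 inv2 by (auto, metis image_eqI)
  have fam: "{J. ideal J S \<and> h ` T \<subseteq> J} = (\<lambda>I. h ` I) ` {I. ideal I R \<and> T \<subseteq> I}"
  proof
    show "{J. ideal J S \<and> h ` T \<subseteq> J} \<subseteq> (\<lambda>I. h ` I) ` {I. ideal I R \<and> T \<subseteq> I}"
    proof
      fix J assume J: "J \<in> {J. ideal J S \<and> h ` T \<subseteq> J}"
      have "ideal (h' ` J) R" using J ideal_transport[OF _ h' hh(1) inv2 inv1 z'] by auto
      moreover have "T \<subseteq> h' ` J" using J inv1 by (auto, metis image_eqI subsetD image_eqI)
      moreover have "J = h ` (h' ` J)" using inv2 by (simp add: image_image)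
      ultimately show "J \<in> (\<lambda>I. h ` I) ` {I. ideal I R \<and> T \<subseteq> I}" by blast
    qed
    show "(\<lambda>I. h ` I) ` {I. ideal I R \<and> T \<subseteq> I} \<subseteq> {J. ideal J S \<and> h ` T \<subseteq> J}"
      using ideal_transport[OF _ h hh(2) inv1 inv2 z] by auto
  qed
  have "h ` (\<Inter>F) = (\<Inter>I\<in>F. h ` I)" for F unfolding img by auto
  thus ?thesis unfolding genideal_def fam by (simp add: image_image)
qed




fun undual :: "'v dualv \<Rightarrow> 'v" where "undual (Dual v) = v"

lemma Dual_undual[simp]: "Dual (undual x) = x" by (cases x) auto
lemma map_Dual_undual[simp]: "map Dual (map undual w) = w" by (induction w) auto
lemma map_undual_Dual[simp]: "map undual (map Dual w) = w" by (induction w) auto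

definition ren :: "('a \<Rightarrow> 'b) \<Rightarrow> ('b list \<Rightarrow> 'k) \<Rightarrow> 'a list \<Rightarrow> 'k" where
  "ren \<sigma> f = (\<lambda>w. f (map \<sigma> w))"

lemma ren_mult: "ren \<sigma> (fa_mult f g) = fa_mult (ren \<sigma> f) (ren \<sigma> g)"
  unfolding ren_def fa_mult_def by (simp add: take_map drop_map)

lemma ren_add: "ren \<sigma> (\<lambda>w. f w + g w) = (\<lambda>w. ren \<sigma> f w + ren \<sigma> g w)"
  unfolding ren_def by simp

lemma ren_one: "ren \<sigma> (\<lambda>w. if w = [] then 1 else 0) = (\<lambda>w. if w = [] then 1 else 0)"
  unfolding ren_def by simp

lemma ren_zero: "ren \<sigma> (\<lambda>w. 0) = (\<lambda>w. 0)" unfolding ren_def by simp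

lemma ren_DU[simp]: "ren Dual (ren undual g) = g" "ren undual (ren Dual f) = f"
  unfolding ren_def by (simp_all del: map_map)

lemma inj_ren_Dual: "inj (ren Dual)" by (metis ren_DU(2) injI)
lemma inj_ren_undual: "inj (ren undual)" by (metis ren_DU(1) injI)

lemma ren_Dual_carrier:
  assumes "f \<in> fa_carrier (Dual ` X)" shows "ren Dual f \<in> fa_carrier X"
proof -
  have "{w. ren Dual f w \<noteq> 0} \<subseteq> map undual ` {w. f w \<noteq> 0}"
    unfolding ren_def proof
    fix x assume "x \<in> {w. f (map Dual w) \<noteq> 0}"
    hence "map Dual x \<in> {w. f w \<noteq> 0}" by simp
    hence "map undual (map Dual x) \<in> map undual ` {w. f w \<noteq> 0}" by (rule imageI)
    thus "x \<in> map undual ` {w. f w \<noteq> 0}" by (simp only: map_undual_Dual)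
  qed
  moreover have "finite {w. f w \<noteq> 0}" using assms by (simp add: fa_carrier_def)
  ultimately have "finite {w. ren Dual f w \<noteq> 0}" using finite_subset finite_imageI by blast
  moreover have "set w \<subseteq> X" if "ren Dual f w \<noteq> 0" for w
  proof -
    have "set (map Dual w) \<subseteq> Dual ` X" using that assms unfolding fa_carrier_def ren_def by blast
    hence "Dual ` set w \<subseteq> Dual ` X" by simp
    thus ?thesis by (simp add: inj_image_subset_iff inj_def)
  qed
  ultimately show ?thesis unfolding fa_carrier_def by auto
qed

lemma ren_undual_carrier:
  assumes "g \<in> fa_carrier X" shows "ren undual g \<in> fa_carrier (Dual ` X)"
proof -
  have "{w. ren undual g w \<noteq> 0} \<subseteq> map Dual ` {w. g w \<noteq> 0}"
    unfolding ren_def proof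
    fix x assume "x \<in> {w. g (map undual w) \<noteq> 0}"
    hence "map undual x \<in> {w. g w \<noteq> 0}" by simp
    hence "map Dual (map undual x) \<in> map Dual ` {w. g w \<noteq> 0}" by (rule imageI)
    thus "x \<in> map Dual ` {w. g w \<noteq> 0}" by (simp only: map_Dual_undual)
  qed
  moreover have "finite {w. g w \<noteq> 0}" using assms by (simp add: fa_carrier_def)
  ultimately have "finite {w. ren undual g w \<noteq> 0}" using finite_subset finite_imageI by blast
  moreover have "set w \<subseteq> Dual ` X" if "ren undual g w \<noteq> 0" for w
  proof -
    have "set (map undual w) \<subseteq> X" using that assms unfolding fa_carrier_def ren_def by blast
    hence "set (map Dual (map undual w)) \<subseteq> Dual ` X" by (simp only: set_map image_mono)
    thus ?thesis by (simp only: map_Dual_undual)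
  qed
  ultimately show ?thesis unfolding fa_carrier_def by auto
qed

lemma ren_Dual_img: "ren Dual ` fa_carrier (Dual ` X) = fa_carrier X"
proof
  show "ren Dual ` fa_carrier (Dual ` X) \<subseteq> fa_carrier X" using ren_Dual_carrier by blast
  show "fa_carrier X \<subseteq> ren Dual ` fa_carrier (Dual ` X)"
  proof
    fix g assume "g \<in> fa_carrier X"
    hence "ren undual g \<in> fa_carrier (Dual ` X)" by (rule ren_undual_carrier)
    moreover have "g = ren Dual (ren undual g)" by simp
    ultimately show "g \<in> ren Dual ` fa_carrier (Dual ` X)" by blast
  qed
qed

lemma ren_undual_img: "ren undual ` fa_carrier X = fa_carrier (Dual ` X)"
proof
  show "ren undual ` fa_carrier X \<subseteq> fa_carrier (Dual ` X)" using ren_undual_carrier by blast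
  show "fa_carrier (Dual ` X) \<subseteq> ren undual ` fa_carrier X"
  proof
    fix g assume "g \<in> fa_carrier (Dual ` X)"
    hence "ren Dual g \<in> fa_carrier X" by (rule ren_Dual_carrier)
    moreover have "g = ren undual (ren Dual g)" by simp
    ultimately show "g \<in> ren undual ` fa_carrier X" by blast
  qed
qed


lemma iso1: "ren Dual \<in> ring_iso (free_alg (Dual ` X) :: ('v dualv list \<Rightarrow> 'k::field) ring) (free_alg X)"
proof (rule ring_iso_memI)
  show "ren Dual x \<in> carrier (free_alg X)" if "x \<in> carrier (free_alg (Dual ` X) :: ('v dualv list \<Rightarrow> 'k::field) ring)" for x
    using that ren_Dual_carrier unfolding free_alg_def by simp
  show "ren Dual (x \<otimes>\<^bsub>free_alg (Dual ` X)\<^esub> y) = ren Dual x \<otimes>\<^bsub>free_alg X\<^esub> ren Dual y" for x y :: "'v dualv list \<Rightarrow> 'k"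
    unfolding free_alg_def by (simp add: ren_mult)
  show "ren Dual (x \<oplus>\<^bsub>free_alg (Dual ` X)\<^esub> y) = ren Dual x \<oplus>\<^bsub>free_alg X\<^esub> ren Dual y" for x y :: "'v dualv list \<Rightarrow> 'k"
    unfolding free_alg_def by (simp add: ren_add)
  show "ren Dual \<one>\<^bsub>free_alg (Dual ` X) :: ('v dualv list \<Rightarrow> 'k::field) ring\<^esub> = \<one>\<^bsub>free_alg X\<^esub>"
    unfolding free_alg_def by (simp add: ren_one)
  show "bij_betw (ren Dual) (carrier (free_alg (Dual ` X) :: ('v dualv list \<Rightarrow> 'k::field) ring)) (carrier (free_alg X))"
    unfolding free_alg_def bij_betw_def using inj_on_subset[OF inj_ren_Dual] ren_Dual_img by (simp add: ren_Dual_img ren_undual_img inj_on_subset[OF inj_ren_Dual] inj_on_subset[OF inj_ren_undual])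
qed

lemma iso2: "ren undual \<in> ring_iso (free_alg X) (free_alg (Dual ` X) :: ('v dualv list \<Rightarrow> 'k::field) ring)"
proof (rule ring_iso_memI)
  show "ren undual x \<in> carrier (free_alg (Dual ` X) :: ('v dualv list \<Rightarrow> 'k::field) ring)" if "x \<in> carrier (free_alg X)" for x
    using that ren_undual_carrier unfolding free_alg_def by simp
  show "ren undual (x \<otimes>\<^bsub>free_alg X\<^esub> y) = ren undual x \<otimes>\<^bsub>free_alg (Dual ` X)\<^esub> ren undual y" for x y :: "'v list \<Rightarrow> 'k"
    unfolding free_alg_def by (simp add: ren_mult)
  show "ren undual (x \<oplus>\<^bsub>free_alg X\<^esub> y) = ren undual x \<oplus>\<^bsub>free_alg (Dual ` X)\<^esub> ren undual y" for x y :: "'v list \<Rightarrow> 'k"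
    unfolding free_alg_def by (simp add: ren_add)
  show "ren undual \<one>\<^bsub>free_alg X\<^esub> = \<one>\<^bsub>free_alg (Dual ` X) :: ('v dualv list \<Rightarrow> 'k::field) ring\<^esub>"
    unfolding free_alg_def by (simp add: ren_one)
  show "bij_betw (ren undual) (carrier (free_alg X)) (carrier (free_alg (Dual ` X) :: ('v dualv list \<Rightarrow> 'k::field) ring))"
    unfolding free_alg_def bij_betw_def using inj_on_subset[OF inj_ren_undual] ren_undual_img by (simp add: ren_Dual_img ren_undual_img inj_on_subset[OF inj_ren_Dual] inj_on_subset[OF inj_ren_undual])
qed




lemma lg_finite: "layered_graph V E lev \<Longrightarrow> finite (Vplus V lev)"
  unfolding layered_graph_def Vplus_def by auto

lemma lg_succs_sub:
  assumes "layered_graph V E lev" "a \<in> Vge V lev 2"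
  shows "succs E a \<subseteq> Vplus V lev"
proof
  fix b assume "b \<in> succs E a"
  hence "(a, b) \<in> E" unfolding succs_def by simp
  with assms show "b \<in> Vplus V lev" unfolding layered_graph_def Vplus_def Vge_def by auto
qed

lemma lg_succs_finite:
  assumes "layered_graph V E lev" shows "finite (succs E a)"
proof -
  have "succs E a \<subseteq> V" using assms unfolding layered_graph_def succs_def by auto
  thus ?thesis using assms unfolding layered_graph_def by (auto intro: finite_subset)
qed

lemma lg_succs_lev1:
  assumes "layered_graph V E lev" "a \<in> Vplus V lev" "a \<notin> Vge V lev 2"
  shows "Vplus V lev \<inter> succs E a = {}"
  using assms unfolding layered_graph_def Vplus_def Vge_def succs_def by fastforce

lemma Vge_sub: "Vge V lev 2 \<subseteq> Vplus V lev" unfolding Vge_def Vplus_def by auto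

lemma mon_app: "mon [a, b] [x, y] = (if a = x \<and> b = y then 1 else 0)"
  unfolding mon_def by auto

lemma pair2_mon:
  assumes "finite Vp" "v \<in> Vp" "u \<in> Vp"
  shows "pair2 Vp X (mon [v, u]) = X [Dual v, Dual u]"
proof -
  have "pair2 Vp X (mon [v, u]) = (\<Sum>a\<in>Vp. \<Sum>b\<in>Vp. if a = v \<and> b = u then X [Dual a, Dual b] else 0)"
    unfolding pair2_def mon_app by (intro sum.cong refl) auto
  also have "\<dots> = (\<Sum>a\<in>Vp. if a = v then X [Dual a, Dual u] else 0)"
    using assms by (intro sum.cong refl) (auto simp: sum.delta)
  also have "\<dots> = X [Dual v, Dual u]" using assms by (simp add: sum.delta)
  finally show ?thesis .
qed

lemma pair2_diff: "pair2 Vp X (\<lambda>x. f x - g x) = pair2 Vp X f - pair2 Vp X g"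
  unfolding pair2_def by (simp add: right_diff_distrib sum_subtractf)

lemma pair2_lin: "pair2 Vp X (\<lambda>w. \<Sum>g\<in>A. c g * g w) = (\<Sum>g\<in>A. c g * pair2 Vp X g)"
  unfolding pair2_def by (simp add: sum_distrib_left sum.swap[of _ A] mult.left_commute)

lemma ren_undual_app: "ren undual h [Dual a, Dual b] = h [a, b]"
  unfolding ren_def by simp

lemma gen_sum_app:
  assumes "finite S"
  shows "(\<Sum>w\<in>S. mon [a, w] [v, u]) = (if v = a \<and> u \<in> S then 1 else 0)"
  using assms unfolding mon_app by (cases "v = a") (auto simp: sum.delta)

lemma gens_supp:
  fixes h :: "'v list \<Rightarrow> 'k::field"
  assumes lg: "layered_graph V E lev" and h: "h \<in> RB_gens V E lev" and nz: "h u \<noteq> 0"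
  shows "\<exists>a b. u = [a, b] \<and> a \<in> Vplus V lev \<and> b \<in> Vplus V lev"
  using h
proof (unfold RB_gens_def, elim UnE CollectE exE conjE)
  fix v w assume "h = mon [v, w]" "v \<in> Vplus V lev" "w \<in> Vplus V lev"
  thus ?thesis using nz unfolding mon_def by (auto split: if_splits)
next
  fix v assume hv: "h = (\<lambda>x. \<Sum>w\<in>succs E v. mon [v, w] x)" "v \<in> Vge V lev 2"
  then obtain w where "w \<in> succs E v" "mon [v, w] u \<noteq> (0::'k)" using nz
    by (metis (mono_tags, lifting) sum.neutral)
  thus ?thesis using lg_succs_sub[OF lg hv(2)] Vge_sub[of V lev] hv(2) unfolding mon_def
    by (auto split: if_splits)
qed

lemma gens_carrier:
  assumes lg: "layered_graph V E lev"
  shows "RB_gens V E lev \<subseteq> (carrier (free_alg (Vplus V lev)) :: ('v list \<Rightarrow> 'k::field) set)"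
proof
  fix h :: "'v list \<Rightarrow> 'k" assume h: "h \<in> RB_gens V E lev"
  let ?Vp = "Vplus V lev"
  have "{u. h u \<noteq> 0} \<subseteq> (\<lambda>(a, b). [a, b]) ` (?Vp \<times> ?Vp)"
    using gens_supp[OF lg h] by force
  moreover have "finite ((\<lambda>(a, b). [a, b]) ` (?Vp \<times> ?Vp))" using lg_finite[OF lg] by simp
  ultimately have "finite {u. h u \<noteq> 0}" by (rule finite_subset)
  moreover have "set u \<subseteq> ?Vp" if "h u \<noteq> 0" for u using gens_supp[OF lg h that] by auto
  ultimately show "h \<in> carrier (free_alg ?Vp)" unfolding free_alg_def fa_carrier_def by simp
qed




lemma gens_const:
  fixes h :: "'v list \<Rightarrow> 'k::field"
  assumes lg: "layered_graph V E lev" and h: "h \<in> RB_gens V E lev"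
    and v: "v \<in> Vge V lev 2" and u: "u \<in> succs E v" and w: "w \<in> succs E v"
  shows "h [v, u] = h [v, w]"
  using h
proof (unfold RB_gens_def, elim UnE CollectE exE conjE)
  fix a b assume "h = mon [a, b]" "(a, b) \<notin> E"
  thus ?thesis using u w unfolding succs_def by (auto simp: mon_app)
next
  fix a assume ha: "h = (\<lambda>x. \<Sum>w\<in>succs E a. mon [a, w] x)"
  show ?thesis unfolding ha gen_sum_app[OF lg_succs_finite[OF lg]] using u w by auto
qed

lemma gens_perp:
  fixes h :: "'v list \<Rightarrow> 'k::field"
  assumes lg: "layered_graph V E lev" and h: "h \<in> RB_gens V E lev"
  shows "ren undual h \<in> Rperp V E lev"
proof -
  let ?Vp = "Vplus V lev"
  have t: "ren undual h \<in> tensor2 (Dual ` ?Vp)"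
    unfolding tensor2_def
  proof (intro CollectI allI impI)
    fix w assume "ren undual h w \<noteq> 0"
    hence "h (map undual w) \<noteq> 0" unfolding ren_def .
    then obtain a b where ab: "map undual w = [a, b]" "a \<in> ?Vp" "b \<in> ?Vp"
      using gens_supp[OF lg h, of "map undual w"] by metis
    have "w = map Dual (map undual w)" by (simp only: map_Dual_undual)
    also have "\<dots> = [Dual a, Dual b]" using ab by simp
    finally show "\<exists>a b. w = [a, b] \<and> a \<in> Dual ` ?Vp \<and> b \<in> Dual ` ?Vp" using ab by blast
  qed
  have "pair2 ?Vp (ren undual h) r = 0" if r: "r \<in> Rrel V E lev" for r
  proof -
    obtain A c where A: "finite A" "A \<subseteq> {(\<lambda>x. mon [v, u] x - mon [v, w] x) | v u w.
       v \<in> Vge V lev 2 \<and> u \<in> succs E v \<and> w \<in> succs E v}" and rr: "r = (\<lambda>w. \<Sum>g\<in>A. c g * g w)"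
      using r unfolding Rrel_def lin_span_def mem_Collect_eq by (elim exE conjE) (rule that)
    have "pair2 ?Vp (ren undual h) g = 0" if "g \<in> A" for g
    proof -
      obtain v u w where g: "g = (\<lambda>x. mon [v, u] x - mon [v, w] x)" and vuw: "v \<in> Vge V lev 2" "u \<in> succs E v" "w \<in> succs E v"
        using subsetD[OF A(2) \<open>g \<in> A\<close>] unfolding mem_Collect_eq by (elim exE conjE) (rule that)
      have "v \<in> ?Vp" "u \<in> ?Vp" "w \<in> ?Vp" using vuw Vge_sub[of V lev] lg_succs_sub[OF lg vuw(1)] by auto
      hence "pair2 ?Vp (ren undual h) g = h [v, u] - h [v, w]"
        unfolding g pair2_diff using lg_finite[OF lg] by (simp add: pair2_mon ren_undual_app)
      thus ?thesis using gens_const[OF lg h vuw] by simp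
    qed
    thus ?thesis unfolding rr pair2_lin by simp
  qed
  thus ?thesis unfolding Rperp_def using t by blast
qed

lemma gens_in_img:
  assumes lg: "layered_graph V E lev"
  shows "(RB_gens V E lev :: ('v list \<Rightarrow> 'k::field) set) \<subseteq> ren Dual ` Rperp V E lev"
proof
  fix h :: "'v list \<Rightarrow> 'k" assume "h \<in> RB_gens V E lev"
  hence "ren undual h \<in> Rperp V E lev" by (rule gens_perp[OF lg])
  moreover have "h = ren Dual (ren undual h)" by simp
  ultimately show "h \<in> ren Dual ` Rperp V E lev" by blast
qed




lemma fa_const_mult: "fa_mult (fa_const c) g = (\<lambda>w. c * g w)"
proof
  fix w :: "'a list"
  show "fa_mult (fa_const c) g w = c * g w"
  proof (cases w)
    case Nil thus ?thesis unfolding fa_mult_def fa_const_def by simp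
  next
    case (Cons x xs)
    have "fa_mult (fa_const c) g w = (\<Sum>i\<le>Suc (length xs). fa_const c (take i w) * g (drop i w))"
      unfolding fa_mult_def Cons by simp
    also have "\<dots> = fa_const c (take 0 w) * g (drop 0 w) + (\<Sum>i\<le>length xs. fa_const c (take (Suc i) w) * g (drop (Suc i) w))"
      by (rule sum.atMost_Suc_shift)
    also have "\<dots> = c * g w"
    proof -
      have "fa_const c (take (Suc i) w) = 0" for i unfolding fa_const_def Cons by simp
      hence "(\<Sum>i\<le>length xs. fa_const c (take (Suc i) w) * g (drop (Suc i) w)) = 0" by simp
      moreover have "fa_const c (take 0 w) * g (drop 0 w) = c * g w" unfolding fa_const_def by simp
      ultimately show ?thesis by simp
    qed
    finally show ?thesis .
  qed
qed

lemma fa_const_carrier: "fa_const c \<in> fa_carrier X"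
proof -
  have "{w. fa_const c w \<noteq> 0} \<subseteq> {[]}" unfolding fa_const_def by auto
  hence "finite {w. fa_const c w \<noteq> 0}" using finite_subset by auto
  moreover have "set w \<subseteq> X" if "fa_const c w \<noteq> 0" for w using that unfolding fa_const_def by (auto split: if_splits)
  ultimately show ?thesis unfolding fa_carrier_def by simp
qed

lemma ideal_smul:
  fixes g :: "'a list \<Rightarrow> 'k::field"
  assumes "ideal I (free_alg X)" "g \<in> I"
  shows "(\<lambda>w. c * g w) \<in> I"
proof -
  have "fa_const c \<otimes>\<^bsub>free_alg X\<^esub> g \<in> I"
  proof -
    have "fa_const c \<in> carrier (free_alg X :: ('a list \<Rightarrow> 'k) ring)" by (simp add: free_alg_def fa_const_carrier)
    thus ?thesis by (rule ideal.I_l_closed[OF assms(1) assms(2)])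
  qed
  thus ?thesis unfolding free_alg_def by (simp add: fa_const_mult)
qed

lemma ideal_sum:
  fixes f :: "'b \<Rightarrow> 'a list \<Rightarrow> 'k::field"
  assumes "ideal I (free_alg X)" "finite K" "\<And>i. i \<in> K \<Longrightarrow> f i \<in> I"
  shows "(\<lambda>w. \<Sum>i\<in>K. f i w) \<in> I"
  using assms(2,3)
proof (induction K rule: finite_induct)
  case empty
  have "\<zero>\<^bsub>free_alg X\<^esub> \<in> I" by (rule additive_subgroup.zero_closed[OF ideal.axioms(1)[OF assms(1)]])
  thus ?case unfolding free_alg_def by simp
next
  case (insert i K)
  have "f i \<oplus>\<^bsub>free_alg X\<^esub> (\<lambda>w. \<Sum>i\<in>K. f i w) \<in> I"
    using additive_subgroup.a_closed[OF ideal.axioms(1)[OF assms(1)]] insert by simp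
  thus ?case using insert unfolding free_alg_def by simp
qed

lemma ideal_add:
  fixes f g :: "'a list \<Rightarrow> 'k::field"
  assumes "ideal I (free_alg X)" "f \<in> I" "g \<in> I"
  shows "(\<lambda>w. f w + g w) \<in> I"
proof -
  have "f \<oplus>\<^bsub>free_alg X\<^esub> g \<in> I"
    using additive_subgroup.a_closed[OF ideal.axioms(1)[OF assms(1)] assms(2,3)] .
  thus ?thesis unfolding free_alg_def by simp
qed

lemma perp_const:
  fixes X :: "'v dualv list \<Rightarrow> 'k::field"
  assumes lg: "layered_graph V E lev" and X: "X \<in> Rperp V E lev"
    and v: "v \<in> Vge V lev 2" and u: "u \<in> succs E v" and w: "w \<in> succs E v"
  shows "X [Dual v, Dual u] = X [Dual v, Dual w]"
proof -
  let ?Vp = "Vplus V lev"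
  let ?r = "(\<lambda>x. mon [v, u] x - mon [v, w] x) :: 'v list \<Rightarrow> 'k"
  have "?r \<in> Rrel V E lev" unfolding Rrel_def lin_span_def
  proof (intro CollectI exI conjI)
    show "finite {?r}" by simp
    show "{?r} \<subseteq> {(\<lambda>x. mon [v, u] x - mon [v, w] x) | v u w.
       v \<in> Vge V lev 2 \<and> u \<in> succs E v \<and> w \<in> succs E v}"
    proof
      fix x assume "x \<in> {?r}" hence x: "x = ?r" by simp
      show "x \<in> {(\<lambda>x. mon [v, u] x - mon [v, w] x) | v u w.
       v \<in> Vge V lev 2 \<and> u \<in> succs E v \<and> w \<in> succs E v}"
        unfolding mem_Collect_eq x
        by (rule exI[of _ v], rule exI[of _ u], rule exI[of _ w]) (simp add: v u w)
    qed
    show "?r = (\<lambda>x. \<Sum>g\<in>{?r}. (\<lambda>_. 1) g * g x)" by simp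
  qed
  hence "pair2 ?Vp X ?r = 0" using X unfolding Rperp_def by simp
  moreover have "v \<in> ?Vp" "u \<in> ?Vp" "w \<in> ?Vp" using v u w Vge_sub[of V lev] lg_succs_sub[OF lg v] by auto
  ultimately show ?thesis unfolding pair2_diff using lg_finite[OF lg] by (simp add: pair2_mon)
qed




lemma mon_gen1:
  assumes "a \<in> Vplus V lev" "b \<in> Vplus V lev" "(a, b) \<notin> E"
  shows "mon [a, b] \<in> RB_gens V E lev"
  unfolding RB_gens_def using assms by (intro UnI1 CollectI exI[of _ a] exI[of _ b]) simp

lemma mon_gen2:
  assumes "a \<in> Vge V lev 2"
  shows "(\<lambda>x. \<Sum>w\<in>succs E a. mon [a, w] x) \<in> RB_gens V E lev"
  unfolding RB_gens_def using assms by (intro UnI2 CollectI exI[of _ a]) simp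

lemma decomp:
  fixes Y :: "'v list \<Rightarrow> 'k::field"
  assumes fin: "finite Vp" and supp: "\<And>w. Y w \<noteq> 0 \<Longrightarrow> \<exists>x y. w = [x, y] \<and> x \<in> Vp \<and> y \<in> Vp"
  shows "Y = (\<lambda>w. \<Sum>a\<in>Vp. \<Sum>b\<in>Vp. Y [a, b] * mon [a, b] w)"
proof
  fix w
  show "Y w = (\<Sum>a\<in>Vp. \<Sum>b\<in>Vp. Y [a, b] * mon [a, b] w)"
  proof (cases "\<exists>x y. w = [x, y] \<and> x \<in> Vp \<and> y \<in> Vp")
    case True
    then obtain x y where w: "w = [x, y]" "x \<in> Vp" "y \<in> Vp" by blast
    have "(\<Sum>a\<in>Vp. \<Sum>b\<in>Vp. Y [a, b] * mon [a, b] w) = (\<Sum>a\<in>Vp. \<Sum>b\<in>Vp. if a = x \<and> b = y then Y [a, b] else 0)"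
      unfolding w(1) mon_app by (intro sum.cong refl) auto
    also have "\<dots> = (\<Sum>a\<in>Vp. if a = x then Y [a, y] else 0)"
      using w fin by (intro sum.cong refl) (auto simp: sum.delta)
    also have "\<dots> = Y w" using w fin by (simp add: sum.delta)
    finally show ?thesis by simp
  next
    case False
    hence "Y w = 0" using supp by blast
    moreover have "mon [a, b] w = (0::'k)" if "a \<in> Vp" "b \<in> Vp" for a b
      using False that unfolding mon_def by auto
    ultimately show ?thesis by simp
  qed
qed

lemma img_in_ideal:
  fixes X :: "'v dualv list \<Rightarrow> 'k::field"
  assumes lg: "layered_graph V E lev" and rR: "ring (free_alg (Vplus V lev) :: ('v list \<Rightarrow> 'k) ring)"
    and X: "X \<in> Rperp V E lev"
  shows "ren Dual X \<in> genideal (free_alg (Vplus V lev)) (RB_gens V E lev)"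
proof -
  let ?Vp = "Vplus V lev"
  let ?R = "free_alg ?Vp :: ('v list \<Rightarrow> 'k) ring"
  let ?I = "genideal ?R (RB_gens V E lev)"
  let ?Y = "ren Dual X"
  have idl: "ideal ?I ?R" using ring.genideal_ideal[OF rR gens_carrier[OF lg]] .
  have gen: "g \<in> ?I" if "g \<in> RB_gens V E lev" for g
    using ring.genideal_self[OF rR gens_carrier[OF lg]] that by (rule subsetD)
  have fin: "finite ?Vp" by (rule lg_finite[OF lg])
  have t: "X \<in> tensor2 (Dual ` ?Vp)" using X unfolding Rperp_def by simp
  have supp: "\<exists>x y. w = [x, y] \<and> x \<in> ?Vp \<and> y \<in> ?Vp" if "?Y w \<noteq> 0" for w
  proof -
    have "X (map Dual w) \<noteq> 0" using that unfolding ren_def .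
    hence "\<exists>p q. map Dual w = [p, q] \<and> p \<in> Dual ` ?Vp \<and> q \<in> Dual ` ?Vp"
      using t unfolding tensor2_def mem_Collect_eq by (elim allE[of _ "map Dual w"]) simp
    then obtain p q where pq: "map Dual w = [p, q]" "p \<in> Dual ` ?Vp" "q \<in> Dual ` ?Vp"
      by (elim exE conjE)
    have "w = map undual (map Dual w)" by (simp only: map_undual_Dual)
    also have "\<dots> = [undual p, undual q]" using pq by simp
    finally show ?thesis using pq by auto
  qed
  have each: "(\<lambda>w. \<Sum>b\<in>?Vp. ?Y [a, b] * mon [a, b] w) \<in> ?I" if a: "a \<in> ?Vp" for a
  proof -
    let ?S = "succs E a"
    have split: "(\<lambda>w. \<Sum>b\<in>?Vp. ?Y [a, b] * mon [a, b] w) =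
      (\<lambda>w. (\<Sum>b\<in>?Vp - ?Vp \<inter> ?S. ?Y [a, b] * mon [a, b] w) + (\<Sum>b\<in>?Vp \<inter> ?S. ?Y [a, b] * mon [a, b] w))"
      using fin by (intro ext sum.subset_diff) auto
    have p1: "(\<lambda>w. \<Sum>b\<in>?Vp - ?Vp \<inter> ?S. ?Y [a, b] * mon [a, b] w) \<in> ?I"
    proof (rule ideal_sum[OF idl])
      show "finite (?Vp - ?Vp \<inter> ?S)" using fin by simp
      fix b assume b: "b \<in> ?Vp - ?Vp \<inter> ?S"
      hence "(a, b) \<notin> E" unfolding succs_def by auto
      hence "mon [a, b] \<in> RB_gens V E lev" using a b by (intro mon_gen1) auto
      thus "(\<lambda>w. ?Y [a, b] * mon [a, b] w) \<in> ?I" by (intro ideal_smul[OF idl] gen)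
    qed
    have p2: "(\<lambda>w. \<Sum>b\<in>?Vp \<inter> ?S. ?Y [a, b] * mon [a, b] w) \<in> ?I"
    proof (cases "a \<in> Vge V lev 2")
      case True
      have S: "?Vp \<inter> ?S = ?S" using lg_succs_sub[OF lg True] by blast
      have "?S \<noteq> {}" using lg a unfolding layered_graph_def by blast
      then obtain b0 where b0: "b0 \<in> ?S" by blast
      have "?Y [a, b] = ?Y [a, b0]" if "b \<in> ?S" for b
        unfolding ren_def using perp_const[OF lg X True that b0] by simp
      hence "(\<lambda>w. \<Sum>b\<in>?Vp \<inter> ?S. ?Y [a, b] * mon [a, b] w) = (\<lambda>w. ?Y [a, b0] * (\<Sum>b\<in>?S. mon [a, b] w))"
        unfolding S by (simp add: sum_distrib_left)
      moreover have "(\<lambda>w. ?Y [a, b0] * (\<Sum>b\<in>?S. mon [a, b] w)) \<in> ?I"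
        by (intro ideal_smul[OF idl] gen mon_gen2 True)
      ultimately show ?thesis by simp
    next
      case False
      have "?Vp \<inter> ?S = {}" by (rule lg_succs_lev1[OF lg a False])
      thus ?thesis using ideal_sum[OF idl, of "{}"] by simp
    qed
    show ?thesis unfolding split by (rule ideal_add[OF idl p1 p2])
  qed
  have "?Y = (\<lambda>w. \<Sum>a\<in>?Vp. \<Sum>b\<in>?Vp. ?Y [a, b] * mon [a, b] w)"
    by (rule decomp[OF fin supp])
  also have "\<dots> \<in> ?I"
    by (rule ideal_sum[OF idl fin each])
  finally show ?thesis .
qed




lemma ren_Dual_mon: "ren Dual (mon [Dual v]) = mon [v]"
  unfolding ren_def mon_def by (intro ext) (auto simp: list.inject)

lemma ren_Dual_const: "ren Dual (fa_const c) = fa_const c"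
  unfolding ren_def fa_const_def by simp

theorem mainTheorem7:
  fixes V :: "'v set" and E :: "('v \<times> 'v) set" and lev :: "'v \<Rightarrow> nat"
  assumes "layered_graph V E lev"
    and "uniform V E lev"
  shows "\<exists>\<phi>. \<phi> \<in> ring_iso (quad_dual V E lev :: ('v dualv list \<Rightarrow> 'k::field) set ring)
                          (B_alg V E lev :: ('v list \<Rightarrow> 'k) set ring)
          \<and> (\<forall>v \<in> Vplus V lev.
               \<phi> (dual_ideal V E lev +>\<^bsub>free_alg (Dual ` Vplus V lev)\<^esub> mon [Dual v])
                 = RB V E lev +>\<^bsub>free_alg (Vplus V lev)\<^esub> mon [v])
          \<and> (\<forall>c::'k. \<phi> (dual_ideal V E lev +>\<^bsub>free_alg (Dual ` Vplus V lev)\<^esub> fa_const c)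
                 = RB V E lev +>\<^bsub>free_alg (Vplus V lev)\<^esub> fa_const c)"
proof -
  note lg = assms(1)
  let ?Vp = "Vplus V lev"
  let ?R1 = "free_alg (Dual ` ?Vp) :: ('v dualv list \<Rightarrow> 'k) ring"
  let ?R2 = "free_alg ?Vp :: ('v list \<Rightarrow> 'k) ring"
  let ?I1 = "dual_ideal V E lev :: ('v dualv list \<Rightarrow> 'k) set"
  let ?I2 = "RB V E lev :: ('v list \<Rightarrow> 'k) set"
  have z1: "ren Dual \<zero>\<^bsub>?R1\<^esub> = \<zero>\<^bsub>?R2\<^esub>" unfolding free_alg_def by (simp add: ren_zero)
  have z2: "ren undual \<zero>\<^bsub>?R2\<^esub> = \<zero>\<^bsub>?R1\<^esub>" unfolding free_alg_def by (simp add: ren_zero)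
  have T: "ren Dual ` ?I1 = genideal ?R2 (ren Dual ` Rperp V E lev)"
    unfolding dual_ideal_def
  proof (rule genideal_transport)
    show "ren Dual \<in> ring_iso ?R1 ?R2" by (rule iso1)
    show "ren undual \<in> ring_iso ?R2 ?R1" by (rule iso2)
  qed (simp_all add: z1 z2)
  have Eq: "genideal ?R2 (ren Dual ` Rperp V E lev) = ?I2"
  proof (cases "ring ?R2")
    case True
    have idl: "ideal ?I2 ?R2" unfolding RB_def using ring.genideal_ideal[OF True gens_carrier[OF lg]] .
    have sub: "ren Dual ` Rperp V E lev \<subseteq> ?I2"
      unfolding RB_def using img_in_ideal[OF lg True] by blast
    have c2: "?I2 \<subseteq> carrier ?R2" using idl ideal.axioms(1) additive_subgroup.a_subset by blast
    show ?thesis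
    proof
      show "genideal ?R2 (ren Dual ` Rperp V E lev) \<subseteq> ?I2"
        by (rule ring.genideal_minimal[OF True idl sub])
      have idl2: "ideal (genideal ?R2 (ren Dual ` Rperp V E lev)) ?R2"
        using ring.genideal_ideal[OF True] sub c2 by blast
      have "RB_gens V E lev \<subseteq> genideal ?R2 (ren Dual ` Rperp V E lev)"
        using gens_in_img[OF lg] ring.genideal_self[OF True] sub c2 by blast
      thus "?I2 \<subseteq> genideal ?R2 (ren Dual ` Rperp V E lev)"
        unfolding RB_def by (rule ring.genideal_minimal[OF True idl2])
    qed
  next
    case False
    thus ?thesis unfolding RB_def using genideal_not_ring by metis
  qed
  have I12: "ren Dual ` ?I1 = ?I2" using T Eq by simp
  have iso: "(\<lambda>A. ren Dual ` A) \<in> ring_iso (?R1 Quot ?I1) (?R2 Quot ?I2)"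
  proof (rule quot_iso[OF inj_ren_Dual _ _ _ _ I12])
    show "ren Dual (x \<otimes>\<^bsub>?R1\<^esub> y) = ren Dual x \<otimes>\<^bsub>?R2\<^esub> ren Dual y" for x y
      unfolding free_alg_def by (simp add: ren_mult)
    show "ren Dual (x \<oplus>\<^bsub>?R1\<^esub> y) = ren Dual x \<oplus>\<^bsub>?R2\<^esub> ren Dual y" for x y
      unfolding free_alg_def by (simp add: ren_add)
    show "ren Dual \<one>\<^bsub>?R1\<^esub> = \<one>\<^bsub>?R2\<^esub>"
      unfolding free_alg_def by (simp add: ren_one)
    show "ren Dual ` carrier ?R1 = carrier ?R2"
      unfolding free_alg_def by (simp add: ren_Dual_img)
  qed
  have add: "ren Dual (x \<oplus>\<^bsub>?R1\<^esub> y) = ren Dual x \<oplus>\<^bsub>?R2\<^esub> ren Dual y" for x y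
    unfolding free_alg_def by (simp add: ren_add)
  have co: "ren Dual ` (?I1 +>\<^bsub>?R1\<^esub> x) = ?I2 +>\<^bsub>?R2\<^esub> ren Dual x" for x
    using img_coset[of "ren Dual" ?R1 ?R2, OF add] I12 by simp
  show ?thesis
  proof (intro exI conjI ballI allI)
    show "(\<lambda>A. ren Dual ` A) \<in> ring_iso (quad_dual V E lev :: ('v dualv list \<Rightarrow> 'k) set ring) (B_alg V E lev)"
      using iso unfolding quad_dual_def B_alg_def .
    show "ren Dual ` (?I1 +>\<^bsub>?R1\<^esub> mon [Dual v]) = ?I2 +>\<^bsub>?R2\<^esub> mon [v]" for v
      by (simp only: co ren_Dual_mon)
    show "ren Dual ` (?I1 +>\<^bsub>?R1\<^esub> fa_const c) = ?I2 +>\<^bsub>?R2\<^esub> fa_const c" for c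
      by (simp only: co ren_Dual_const)
  qed
qed


end
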